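(* Let $\rho>0$ and $f\in L_2(\mu)$. Then $[\mathcal{O},\iota\Lambda_\rho]f=0$ if and only if $[\mathcal{O},T_k](T_k+\rho\,\mathrm{id})^{-1}f=0$. Consequently the following are equivalent: (a) there exists $\rho>0$ with $[\mathcal{O},\iota\Lambda_\rho]=0$; (b) for all $\rho>0$, $[\mathcal{O},\iota\Lambda_\rho]=0$; (c) $[\mathcal{O},T_k]=0$.
   Context: $\mathcal{G}$ is a compact, second countable, Hausdorff topological group with Haar probability measure $\lambda$, acting measurably on a nonempty Polish space $\mathcal{X}$; $\mu$ is a $\mathcal{G}$-invariant Borel probability measure on $\mathcal{X}$ with $\mathrm{supp}\,\mu=\mathcal{X}$. $k:\mathcal{X}\times\mathcal{X}\to\mathbb{R}$ is a measurable symmetric positive definite kernel with RKHS $\mathcal{H}$, $k(\cdot,x)$ continuous for all $x$, $\sup_xk(x,x)<\infty$. $\iota:\mathcal{H}\to L_2(\mu)$ is the inclusion; $S_k:L_2(\mu)\to\mathcal{H}$, $S_kf(x)=\int k(x,x')f(x')d\mu(x')$; $T_k=\iota\circ S_k:L_2(\mu)\to L_2(\mu)$. For $\rho>0$, $\Lambda_\rho:L_2(\mu)\to\mathcal{H}$ maps $h$ to the unique minimiser over $f\in\mathcal{H}$ of $\|\iota f-h\|_\mu^2+\rho\|f\|_\mathcal{H}^2$. $\mathcal{O}f(x)=\int_\mathcal{G}f(gx)d\lambda(g)$ on $L_2(\mu)$. $[A,B]=AB-BA$. *)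

theory Defs
  imports "HOL-Probability.Probability"
begin

text \<open>The compact group is a type 'g of class topological_group_add (written additively,
  NOT assumed commutative).\<close>

definition haar_prob :: "'g::topological_group_add measure \<Rightarrow> bool" where
  "haar_prob lam \<longleftrightarrow> sets lam = sets borel \<and> prob_space lam \<and>
     (\<forall>g A. A \<in> sets borel \<longrightarrow> emeasure lam ((\<lambda>h. g + h) -` A) = emeasure lam A)"

definition group_action :: "('g::group_add \<Rightarrow> 'x \<Rightarrow> 'x) \<Rightarrow> bool" where
  "group_action act \<longleftrightarrow> (\<forall>x. act 0 x = x) \<and> (\<forall>g h x. act (g + h) x = act g (act h x))"

definition invariant_measure :: "('g \<Rightarrow> 'x \<Rightarrow> 'x) \<Rightarrow> 'x::topological_space measure \<Rightarrow> bool" where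
  "invariant_measure act mu \<longleftrightarrow>
     (\<forall>g A. A \<in> sets borel \<longrightarrow> emeasure mu (act g -` A) = emeasure mu A)"

definition full_support :: "'x::topological_space measure \<Rightarrow> bool" where
  "full_support mu \<longleftrightarrow> (\<forall>U. open U \<longrightarrow> U \<noteq> {} \<longrightarrow> emeasure mu U > 0)"

definition pos_def_kernel :: "('x \<Rightarrow> 'x \<Rightarrow> real) \<Rightarrow> bool" where
  "pos_def_kernel k \<longleftrightarrow>
     (\<forall>n (c::nat \<Rightarrow> real) (xs::nat \<Rightarrow> 'x). (\<Sum>i<n. \<Sum>j<n. c i * c j * k (xs i) (xs j)) \<ge> 0)"

text \<open>The RKHS of k is represented by a real Hilbert space type 'h together with an
  injective map evH sending each element to the function on X it is; the kernel sections
  k(.,x) belong to H and the reproducing property holds.\<close>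
definition is_rkhs :: "('x \<Rightarrow> 'x \<Rightarrow> real) \<Rightarrow> ('h::{real_inner,complete_space} \<Rightarrow> 'x \<Rightarrow> real) \<Rightarrow> bool" where
  "is_rkhs k evH \<longleftrightarrow> inj evH \<and>
     (\<forall>x. \<exists>kx. evH kx = (\<lambda>y. k y x) \<and> (\<forall>f. evH f x = f \<bullet> kx))"

section \<open>L2 and the operators (functions modulo mu-a.e. equality)\<close>

definition in_L2 :: "'x measure \<Rightarrow> ('x \<Rightarrow> real) \<Rightarrow> bool" where
  "in_L2 mu f \<longleftrightarrow> f \<in> borel_measurable mu \<and> integrable mu (\<lambda>x. (f x)\<^sup>2)"

definition orbit_avg :: "'g measure \<Rightarrow> ('g \<Rightarrow> 'x \<Rightarrow> 'x) \<Rightarrow> ('x \<Rightarrow> real) \<Rightarrow> 'x \<Rightarrow> real" where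
  "orbit_avg lam act f x = (\<integral>g. f (act g x) \<partial>lam)"

definition T_op :: "'x measure \<Rightarrow> ('x \<Rightarrow> 'x \<Rightarrow> real) \<Rightarrow> ('x \<Rightarrow> real) \<Rightarrow> 'x \<Rightarrow> real" where
  "T_op mu k f x = (\<integral>x'. k x x' * f x' \<partial>mu)"

definition Lambda_op :: "'x measure \<Rightarrow> ('h::real_normed_vector \<Rightarrow> 'x \<Rightarrow> real) \<Rightarrow> real \<Rightarrow> ('x \<Rightarrow> real) \<Rightarrow> 'h" where
  "Lambda_op mu evH rho h = (THE f. \<forall>f'.
      (\<integral>x. (evH f x - h x)\<^sup>2 \<partial>mu) + rho * (norm f)\<^sup>2 \<le> (\<integral>x. (evH f' x - h x)\<^sup>2 \<partial>mu) + rho * (norm f')\<^sup>2)"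

text \<open>(T_k + rho id)^{-1} f: an L2 solution g of T_k g + rho g = f (unique up to a.e.).\<close>
definition resolvent :: "'x measure \<Rightarrow> ('x \<Rightarrow> 'x \<Rightarrow> real) \<Rightarrow> real \<Rightarrow> ('x \<Rightarrow> real) \<Rightarrow> 'x \<Rightarrow> real" where
  "resolvent mu k rho f = (SOME g. in_L2 mu g \<and> (AE x in mu. T_op mu k g x + rho * g x = f x))"

definition comm_O_Lambda :: "'g measure \<Rightarrow> ('g \<Rightarrow> 'x \<Rightarrow> 'x) \<Rightarrow> 'x measure \<Rightarrow> ('h::real_normed_vector \<Rightarrow> 'x \<Rightarrow> real)
     \<Rightarrow> real \<Rightarrow> ('x \<Rightarrow> real) \<Rightarrow> 'x \<Rightarrow> real" where
  "comm_O_Lambda lam act mu evH rho f x =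
     orbit_avg lam act (evH (Lambda_op mu evH rho f)) x - evH (Lambda_op mu evH rho (orbit_avg lam act f)) x"

definition comm_O_T :: "'g measure \<Rightarrow> ('g \<Rightarrow> 'x \<Rightarrow> 'x) \<Rightarrow> 'x measure \<Rightarrow> ('x \<Rightarrow> 'x \<Rightarrow> real)
     \<Rightarrow> ('x \<Rightarrow> real) \<Rightarrow> 'x \<Rightarrow> real" where
  "comm_O_T lam act mu k f x = orbit_avg lam act (T_op mu k f) x - T_op mu k (orbit_avg lam act f) x"

end

theory Submission imports Defs begin

lemma lin_quad_nonneg_zero:
  fixes a b :: real
  assumes "b \<ge> 0" "\<And>t. a * t + b * t^2 \<ge> 0"
  shows "a = 0"
proof (rule ccontr)
  assume "a \<noteq> 0"
  define t where "t = - a / (b + 1)"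
  have b1: "b + 1 > 0" using assms(1) by simp
  have ta: "t * (b + 1) = - a" using b1 unfolding t_def by simp
  have tn: "t \<noteq> 0" using \<open>a \<noteq> 0\<close> ta by auto
  have "a * t + b * t^2 = t * (a + b * t)" by (simp add: algebra_simps power2_eq_square)
  also have "a + b * t = - t" using ta by (simp add: algebra_simps)
  finally have "a * t + b * t^2 = - (t^2)" by (simp add: power2_eq_square)
  moreover have "t^2 > 0" using tn by simp
  ultimately show False using assms(2)[of t] by linarith
qed

lemma gen1: "(x::real) < m + a \<Longrightarrow> y < m + b \<Longrightarrow> (y + x)/2 - m \<le> (a + b)/2"
  by (simp add: field_simps)
lemma gen2: "(a::real) \<le> z \<Longrightarrow> b \<le> z \<Longrightarrow> x \<le> (a + b)/2 \<Longrightarrow> z < y \<Longrightarrow> x < y"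
  by (simp add: field_simps)

locale quad_fun =
  fixes J :: "'h::{real_inner,complete_space} \<Rightarrow> real" and S :: "'h set"
    and L :: "'h \<Rightarrow> 'h \<Rightarrow> real" and Q :: "'h \<Rightarrow> real" and c B m0 :: real
  assumes S_closed: "closed S" and S_sub: "subspace S"
  and expand: "\<And>w d t. w \<in> S \<Longrightarrow> d \<in> S \<Longrightarrow> J (w + t *\<^sub>R d) = J w + 2*t*L w d + t^2 * Q d"
  and Qlow: "\<And>d. d\<in>S \<Longrightarrow> c * (norm d)^2 \<le> Q d" and c_pos: "c > 0"
  and Lb: "\<And>w. w\<in>S \<Longrightarrow> \<exists>A. \<forall>d\<in>S. \<bar>L w d\<bar> \<le> A * norm d"
  and Qb: "\<And>d. d\<in>S \<Longrightarrow> Q d \<le> B * (norm d)^2"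
  and bdd: "\<And>w. w\<in>S \<Longrightarrow> m0 \<le> J w"
begin

lemma Q_nonneg: "d \<in> S \<Longrightarrow> Q d \<ge> 0"
  using Qlow[of d] c_pos by (smt (verit) mult_nonneg_nonneg zero_le_power2)

lemma mid:
  assumes "a \<in> S" "b \<in> S"
  shows "c/4 * (norm (b - a))^2 \<le> (J a + J b)/2 - J (a + (1/2) *\<^sub>R (b - a))"
proof -
  have d: "b - a \<in> S" using assms S_sub by (simp add: subspace_diff)
  have e1: "J (a + (1/2) *\<^sub>R (b - a)) = J a + L a (b-a) + Q (b-a)/4"
    using expand[OF assms(1) d, of "1/2"] by (simp add: power2_eq_square)
  have e2: "J b = J a + 2 * L a (b-a) + Q (b-a)"
    using expand[OF assms(1) d, of 1] by simp
  have "(J a + J b)/2 - J (a + (1/2) *\<^sub>R (b - a)) = Q (b-a)/4" using e1 e2 by (simp add: field_simps)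
  moreover have "c/4 * (norm (b - a))^2 \<le> Q (b-a)/4" using Qlow[OF d] by simp
  ultimately show ?thesis by simp
qed

lemma foc:
  assumes u: "u \<in> S" and min: "\<forall>v\<in>S. J u \<le> J v" and d: "d \<in> S"
  shows "L u d = 0"
proof -
  have "(2 * L u d) = 0"
  proof (rule lin_quad_nonneg_zero[where b = "Q d"])
    show "0 \<le> Q d" using Q_nonneg d .
    fix t
    have "u + t *\<^sub>R d \<in> S" using u d S_sub by (simp add: subspace_add subspace_scale)
    then have "J u \<le> J (u + t *\<^sub>R d)" using min by blast
    then show "0 \<le> 2 * L u d * t + Q d * t\<^sup>2" using expand[OF u d, of t] by (simp add: algebra_simps)
  qed
  then show ?thesis by simp
qed

lemma unique:
  assumes u: "u \<in> S" "\<forall>v\<in>S. J u \<le> J v" and u': "u' \<in> S" "\<forall>v\<in>S. J u' \<le> J v"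
  shows "u = u'"
proof -
  have d: "u' - u \<in> S" using u u' S_sub by (simp add: subspace_diff)
  have "J u' = J u + 2 * L u (u' - u) + Q (u' - u)"
    using expand[OF u(1) d, of 1] by simp
  also have "L u (u' - u) = 0" using foc[OF u d] .
  finally have "J u' = J u + Q (u' - u)" by simp
  moreover have "J u' \<le> J u" using u' u by blast
  ultimately have "c * (norm (u' - u))^2 \<le> 0" using Qlow[OF d] by simp
  then have "norm (u' - u) = 0" using c_pos
    by (smt (verit) mult_pos_pos norm_ge_zero zero_less_power2)
  then show ?thesis by simp
qed

lemma exists_min: "\<exists>u\<in>S. \<forall>v\<in>S. J u \<le> J v"
proof -
  define m where "m = Inf (J ` S)"
  have ne: "J ` S \<noteq> {}" using S_sub subspace_0 by blast
  have bb: "bdd_below (J ` S)" using bdd by (metis bdd_belowI2)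
  have m_le: "\<And>v. v \<in> S \<Longrightarrow> m \<le> J v" unfolding m_def using bb by (simp add: cInf_lower)
  have "\<forall>n. \<exists>x\<in>S. J x < m + inverse (real (Suc n))"
  proof
    fix n
    have "m < m + inverse (real (Suc n))" by simp
    then obtain y where "y \<in> J ` S" "y < m + inverse (real (Suc n))"
      unfolding m_def using cInf_lessD[OF ne] by blast
    then show "\<exists>x\<in>S. J x < m + inverse (real (Suc n))" by blast
  qed
  then obtain s where s: "\<And>n. s n \<in> S" "\<And>n. J (s n) < m + inverse (real (Suc n))"
    by metis
  have key: "c/4 * (norm (s n - s p))^2 \<le> (inverse (real (Suc n)) + inverse (real (Suc p)))/2" for n p
  proof -
    have "c/4 * (norm (s n - s p))^2 \<le> (J (s p) + J (s n))/2 - J (s p + (1/2) *\<^sub>R (s n - s p))"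
      using mid[OF s(1)[of p] s(1)[of n]] .
    moreover have "s p + (1/2) *\<^sub>R (s n - s p) \<in> S" using s(1) S_sub
      by (simp add: subspace_add subspace_scale subspace_diff)
    then have "m \<le> J (s p + (1/2) *\<^sub>R (s n - s p))" by (rule m_le)
    ultimately have "c/4 * (norm (s n - s p))^2 \<le> (J (s p) + J (s n))/2 - m" by linarith
    moreover have "(J (s p) + J (s n))/2 - m \<le> (inverse (real (Suc n)) + inverse (real (Suc p)))/2"
    proof -
      show ?thesis by (rule gen1[OF s(2)[of n] s(2)[of p]])
    qed
    ultimately show ?thesis by linarith
  qed
  have "Cauchy s"
  proof (rule metric_CauchyI)
    fix e :: real assume e: "e > 0"
    obtain N where N: "inverse (real (Suc N)) < c/4 * e^2"
      using reals_Archimedean[of "c/4 * e^2"] e c_pos by auto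
    show "\<exists>M. \<forall>m\<ge>M. \<forall>n\<ge>M. dist (s m) (s n) < e"
    proof (intro exI allI impI)
      fix n p assume np: "N \<le> n" "N \<le> p"
      have i1: "inverse (real (Suc n)) \<le> inverse (real (Suc N))" and i2: "inverse (real (Suc p)) \<le> inverse (real (Suc N))"
        using np by (auto intro!: le_imp_inverse_le)
      have "c/4 * (norm (s n - s p))^2 < c/4 * e^2" by (rule gen2[OF i1 i2 key[of n p] N])
      then have "(norm (s n - s p))^2 < e^2" using c_pos by simp
      then have "norm (s n - s p) < e" using e by (smt (verit) power_mono norm_ge_zero)
      then show "dist (s n) (s p) < e" by (simp add: dist_norm)
    qed
  qed
  then obtain l where l: "s \<longlonglongrightarrow> l" using Cauchy_convergent_iff convergent_def by blast
  have lS: "l \<in> S" using S_closed l s(1) closed_sequential_limits by blast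
  obtain A where A: "\<forall>d\<in>S. \<bar>L l d\<bar> \<le> A * norm d" using Lb[OF lS] by blast
  have dS: "s n - l \<in> S" for n using s(1) lS S_sub by (simp add: subspace_diff)
  have bound: "\<bar>J (s n) - J l\<bar> \<le> 2 * A * norm (s n - l) + B * (norm (s n - l))^2" for n
  proof -
    have "J (s n) = J l + 2 * L l (s n - l) + Q (s n - l)"
      using expand[OF lS dS[of n], of 1] by simp
    moreover have "\<bar>L l (s n - l)\<bar> \<le> A * norm (s n - l)" using A dS by blast
    moreover have "Q (s n - l) \<le> B * (norm (s n - l))^2" using Qb dS by blast
    moreover have "Q (s n - l) \<ge> 0" using Q_nonneg dS by blast
    ultimately show ?thesis by linarith
  qed
  have nz: "(\<lambda>n. norm (s n - l)) \<longlonglongrightarrow> 0" using l by (simp add: LIM_zero tendsto_norm_zero)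
  have nz2: "(\<lambda>n. (norm (s n - l))^2) \<longlonglongrightarrow> 0" using tendsto_power[OF nz, of 2] by simp
  have lim: "(\<lambda>n. 2 * A * norm (s n - l) + B * (norm (s n - l))^2) \<longlonglongrightarrow> 0"
    using tendsto_add[OF tendsto_mult_right_zero[OF nz, of "2*A"] tendsto_mult_right_zero[OF nz2, of B]] by simp
  have ev: "\<forall>n. norm (J (s n) - J l) \<le> 2 * A * norm (s n - l) + B * (norm (s n - l))^2"
    using bound by simp
  have "(\<lambda>n. J (s n) - J l) \<longlonglongrightarrow> 0"
    by (rule Lim_null_comparison[OF always_eventually[OF ev] lim])
  then have t1: "(\<lambda>n. J (s n)) \<longlonglongrightarrow> J l" by (simp add: LIM_zero_cancel)
  have t2: "(\<lambda>n. J (s n)) \<longlonglongrightarrow> m"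
  proof (rule tendsto_sandwich[OF always_eventually always_eventually])
    show "\<forall>n. m \<le> J (s n)" using m_le s(1) by blast
    show "\<forall>n. J (s n) \<le> m + inverse (real (Suc n))" using s(2) less_imp_le by blast
    show "(\<lambda>n. m) \<longlonglongrightarrow> m" by simp
    show "(\<lambda>n. m + inverse (real (Suc n))) \<longlonglongrightarrow> m"
      using tendsto_add[OF tendsto_const LIMSEQ_inverse_real_of_nat, of m] by simp
  qed
  have "J l = m" using LIMSEQ_unique[OF t1 t2] .
  then show ?thesis using lS m_le by auto
qed

end

lemma norm_sq_expand:
  fixes a d :: "'a::real_inner"
  shows "(norm (a - t *\<^sub>R d))^2 = (norm a)^2 - 2*t*(a \<bullet> d) + t^2 * (norm d)^2"
proof -
  have e: "(a - t *\<^sub>R d) \<bullet> (a - t *\<^sub>R d) = a \<bullet> a - 2*t*(a \<bullet> d) + t^2 * (d \<bullet> d)"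
    by (simp only: inner_diff_left inner_diff_right inner_scaleR_left inner_scaleR_right inner_commute[of d a])
       (simp add: algebra_simps power2_eq_square)
  show ?thesis unfolding power2_norm_eq_inner by (rule e)
qed

locale rk =
  fixes mu :: "'x::topological_space measure" and k :: "'x \<Rightarrow> 'x \<Rightarrow> real"
    and evH :: "'h::{real_inner,complete_space} \<Rightarrow> 'x \<Rightarrow> real"
  assumes mu_sets: "sets mu = sets borel" and mu_prob: "prob_space mu"
  and k_sym: "\<And>x y. k x y = k y x" and k_cont: "\<And>x. continuous_on UNIV (\<lambda>y. k y x)"
  and k_bdd: "bdd_above (range (\<lambda>x. k x x))" and H: "is_rkhs k evH"
begin

definition kv :: "'x \<Rightarrow> 'h" where
  "kv x = (SOME v. evH v = (\<lambda>y. k y x) \<and> (\<forall>f. evH f x = f \<bullet> v))"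

lemma kv_prop: "evH (kv x) = (\<lambda>y. k y x) \<and> (\<forall>f. evH f x = f \<bullet> kv x)"
proof -
  have "\<exists>v. evH v = (\<lambda>y. k y x) \<and> (\<forall>f. evH f x = f \<bullet> v)" using H unfolding is_rkhs_def by blast
  then show ?thesis unfolding kv_def by (rule someI_ex)
qed

lemma ev_kv: "evH (kv x) = (\<lambda>y. k y x)" using kv_prop by blast
lemma ev_inner: "evH f x = f \<bullet> kv x" using kv_prop by blast
lemma ev_inj: "evH a = evH b \<Longrightarrow> a = b" using H unfolding is_rkhs_def inj_def by blast

lemma ev_add: "evH (a + b) x = evH a x + evH b x" by (simp add: ev_inner inner_add_left)
lemma ev_diff: "evH (a - b) x = evH a x - evH b x" by (simp add: ev_inner inner_diff_left)
lemma ev_scale: "evH (t *\<^sub>R a) x = t * evH a x" by (simp add: ev_inner)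
lemma ev_zero: "evH 0 x = 0" by (simp add: ev_inner)

lemma k_inner: "k y x = kv x \<bullet> kv y"
proof -
  have "k y x = evH (kv x) y" by (simp add: ev_kv)
  also have "\<dots> = kv x \<bullet> kv y" by (rule ev_inner)
  finally show ?thesis .
qed

definition K :: real where "K = Sup (range (\<lambda>x. k x x))"

lemma kxx_le: "k x x \<le> K" unfolding K_def using k_bdd by (simp add: cSup_upper)
lemma kxx_norm: "k x x = (norm (kv x))^2" by (simp add: k_inner power2_norm_eq_inner)
lemma K_nonneg: "K \<ge> 0"
proof -
  have "0 \<le> k x x" for x by (simp add: kxx_norm)
  then show ?thesis using order_trans[OF _ kxx_le] by blast
qed
lemma norm_kv: "norm (kv x) \<le> sqrt K"
proof -
  have "(norm (kv x))^2 \<le> K" using kxx_le[of x] unfolding kxx_norm .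
  then show ?thesis by (rule real_le_rsqrt)
qed
lemma ev_bound: "\<bar>evH f x\<bar> \<le> norm f * sqrt K"
proof -
  have "\<bar>evH f x\<bar> = \<bar>f \<bullet> kv x\<bar>" by (rule arg_cong[where f=abs, OF ev_inner])
  also have "\<dots> \<le> norm f * norm (kv x)" by (rule Cauchy_Schwarz_ineq2)
  also have "\<dots> \<le> norm f * sqrt K" by (rule mult_left_mono[OF norm_kv norm_ge_zero])
  finally show ?thesis .
qed
lemma k_bound: "\<bar>k x y\<bar> \<le> K"
proof -
  have "\<bar>k x y\<bar> = \<bar>kv y \<bullet> kv x\<bar>" by (rule arg_cong[where f=abs, OF k_inner])
  also have "\<dots> \<le> norm (kv y) * norm (kv x)" by (rule Cauchy_Schwarz_ineq2)
  also have "\<dots> \<le> sqrt K * sqrt K"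
    by (rule mult_mono[OF norm_kv norm_kv real_sqrt_ge_zero[OF K_nonneg] norm_ge_zero])
  also have "\<dots> = K" using K_nonneg by simp
  finally show ?thesis .
qed

definition Cset :: "'h set" where "Cset = {u. continuous_on UNIV (evH u)}"

lemma Cset_sub: "subspace Cset"
proof (rule subspaceI)
  show "0 \<in> Cset" unfolding Cset_def by (simp add: ev_zero[abs_def])
  fix a b assume "a \<in> Cset" "b \<in> Cset"
  then show "a + b \<in> Cset" unfolding Cset_def by (simp add: ev_add[abs_def] continuous_on_add)
next
  fix c a assume "a \<in> Cset"
  then show "c *\<^sub>R a \<in> Cset" unfolding Cset_def by (simp add: ev_scale[abs_def] continuous_on_mult_left)
qed

lemma kv_Cset: "kv x \<in> Cset" by (simp add: Cset_def ev_kv k_cont)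

lemma Cset_closed: "closed Cset"
  unfolding closed_sequential_limits
proof (intro allI impI, elim conjE)
  fix s l assume s: "\<forall>n. s n \<in> Cset" and l: "s \<longlonglongrightarrow> l"
  have "continuous_on UNIV (evH l)"
  proof (rule uniform_limit_theorem[where f = "\<lambda>n. evH (s n)" and F = sequentially])
    show "\<forall>\<^sub>F n in sequentially. continuous_on UNIV (evH (s n))" using s unfolding Cset_def by simp
    show "\<not> trivial_limit sequentially" by simp
    show "uniform_limit UNIV (\<lambda>n. evH (s n)) (evH l) sequentially"
    proof (rule uniform_limitI)
      fix e :: real assume e: "e > 0"
      have "sqrt K + 1 > 0" using K_nonneg by (smt (verit) real_sqrt_ge_zero)
      then have "e / (sqrt K + 1) > 0" using e by simp
      then have ev: "\<forall>\<^sub>F n in sequentially. dist (s n) l < e / (sqrt K + 1)"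
        by (rule tendstoD[OF l])
      show "\<forall>\<^sub>F n in sequentially. \<forall>x\<in>UNIV. dist (evH (s n) x) (evH l x) < e"
      proof (rule eventually_mono[OF ev], intro ballI)
        fix n x assume d: "dist (s n) l < e / (sqrt K + 1)"
        have "dist (evH (s n) x) (evH l x) = \<bar>evH (s n - l) x\<bar>" by (simp add: ev_diff dist_real_def)
        also have "\<dots> \<le> norm (s n - l) * sqrt K" by (rule ev_bound)
        also have "\<dots> \<le> norm (s n - l) * (sqrt K + 1)" by (rule mult_left_mono) simp_all
        also have "\<dots> < e" using d \<open>sqrt K + 1 > 0\<close> by (simp add: dist_norm pos_less_divide_eq)
        finally show "dist (evH (s n) x) (evH l x) < e" .
      qed
    qed
  qed
  then show "l \<in> Cset" unfolding Cset_def by simp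
qed

lemma ev_cont: "continuous_on UNIV (evH u)"
proof -
  interpret P: quad_fun "\<lambda>v. (norm (u - v))^2" Cset "\<lambda>w d. - ((u - w) \<bullet> d)" "\<lambda>d. (norm d)^2" 1 1 0
  proof
    show "closed Cset" by (rule Cset_closed)
    show "subspace Cset" by (rule Cset_sub)
    fix w d t
    show "(norm (u - (w + t *\<^sub>R d)))\<^sup>2 = (norm (u - w))\<^sup>2 + 2 * t * - ((u - w) \<bullet> d) + t\<^sup>2 * (norm d)\<^sup>2"
    proof -
      have "u - (w + t *\<^sub>R d) = (u - w) - t *\<^sub>R d" by (simp only: diff_diff_eq)
      then have "(norm (u - (w + t *\<^sub>R d)))\<^sup>2 = (norm (u - w))^2 - 2*t*((u - w) \<bullet> d) + t^2 * (norm d)^2"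
        by (simp only: norm_sq_expand)
      then show ?thesis by simp
    qed
  next
    fix w assume "w \<in> Cset"
    show "\<exists>A. \<forall>d\<in>Cset. \<bar>- ((u - w) \<bullet> d)\<bar> \<le> A * norm d"
      by (rule exI[of _ "norm (u - w)"]) (simp add: Cauchy_Schwarz_ineq2)
  qed auto
  obtain p where p: "p \<in> Cset" "\<forall>v\<in>Cset. (norm (u - p))^2 \<le> (norm (u - v))^2"
    using P.exists_min by blast
  have "(u - p) \<bullet> kv x = 0" for x using P.foc[OF p kv_Cset[of x]] by simp
  then have "evH (u - p) = evH 0" by (simp add: fun_eq_iff ev_zero ev_inner)
  then have "u - p = 0" by (rule ev_inj)
  then have "u = p" by simp
  then show ?thesis using p(1) unfolding Cset_def by simp
qed

lemma ev_meas: "evH u \<in> borel_measurable mu"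
proof -
  have eq: "(borel_measurable mu :: ('x \<Rightarrow> real) set) = borel_measurable borel"
    by (rule measurable_cong_sets[OF mu_sets refl])
  show ?thesis unfolding eq by (rule borel_measurable_continuous_onI[OF ev_cont])
qed

end

section \<open>L2 facts\<close>

lemma abs_mult_le_sq: "\<bar>a * b\<bar> \<le> a^2 + (b::real)^2"
proof -
  have "2 * \<bar>a\<bar> * \<bar>b\<bar> \<le> \<bar>a\<bar>^2 + \<bar>b\<bar>^2" by (rule sum_squares_bound)
  moreover have "\<bar>a\<bar>^2 = a^2" "\<bar>b\<bar>^2 = b^2" by simp_all
  moreover have "0 \<le> \<bar>a\<bar> * \<bar>b\<bar>" by simp
  ultimately show ?thesis unfolding abs_mult by linarith
qed

context prob_space
begin

lemma L2_integrable: "in_L2 M f \<Longrightarrow> integrable M f"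
  unfolding in_L2_def by (auto intro: square_integrable_imp_integrable)

lemma L2_sq: "in_L2 M f \<Longrightarrow> integrable M (\<lambda>x. (f x)^2)"
  unfolding in_L2_def by auto

lemma L2_meas: "in_L2 M f \<Longrightarrow> f \<in> borel_measurable M"
  unfolding in_L2_def by auto

lemma L2_mult: assumes "in_L2 M f" "in_L2 M g" shows "integrable M (\<lambda>x. f x * g x)"
proof (rule Bochner_Integration.integrable_bound[where f="\<lambda>x. (f x)^2 + (g x)^2"])
  show "integrable M (\<lambda>x. (f x)^2 + (g x)^2)" using assms by (simp add: L2_sq)
  show "(\<lambda>x. f x * g x) \<in> borel_measurable M" by (rule borel_measurable_times[OF L2_meas[OF assms(1)] L2_meas[OF assms(2)]])
  have "\<forall>x. norm (f x * g x) \<le> norm ((f x)^2 + (g x)^2)"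
  proof
    fix x
    have "\<bar>f x * g x\<bar> \<le> (f x)^2 + (g x)^2" by (rule abs_mult_le_sq)
    also have "\<dots> \<le> \<bar>(f x)^2 + (g x)^2\<bar>" by simp
    finally show "norm (f x * g x) \<le> norm ((f x)^2 + (g x)^2)" by simp
  qed
  then show "AE x in M. norm (f x * g x) \<le> norm ((f x)^2 + (g x)^2)" by simp
qed

lemma L2_add: assumes "in_L2 M f" "in_L2 M g" shows "in_L2 M (\<lambda>x. f x + g x)"
proof -
  have "(\<lambda>x. (f x + g x)^2) = (\<lambda>x. (f x)^2 + (2 * (f x * g x) + (g x)^2))"
    by (simp add: fun_eq_iff power2_eq_square algebra_simps)
  moreover have "integrable M (\<lambda>x. (f x)^2 + (2 * (f x * g x) + (g x)^2))"
    using assms L2_mult[OF assms] by (simp add: L2_sq)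
  moreover have "(\<lambda>x. f x + g x) \<in> borel_measurable M"
    by (rule borel_measurable_add[OF L2_meas[OF assms(1)] L2_meas[OF assms(2)]])
  ultimately show ?thesis unfolding in_L2_def by simp
qed

lemma L2_scale: assumes "in_L2 M f" shows "in_L2 M (\<lambda>x. c * f x)"
proof -
  have "(\<lambda>x. (c * f x)^2) = (\<lambda>x. c^2 * (f x)^2)" by (simp add: fun_eq_iff power_mult_distrib)
  moreover have "integrable M (\<lambda>x. c^2 * (f x)^2)" using assms by (simp add: L2_sq)
  moreover have "(\<lambda>x. c * f x) \<in> borel_measurable M"
    by (rule borel_measurable_times[OF borel_measurable_const L2_meas[OF assms(1)]])
  ultimately show ?thesis unfolding in_L2_def by simp
qed

lemma L2_diff: assumes "in_L2 M f" "in_L2 M g" shows "in_L2 M (\<lambda>x. f x - g x)"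
proof -
  have "in_L2 M (\<lambda>x. f x + (-1) * g x)" by (rule L2_add[OF assms(1) L2_scale[OF assms(2)]])
  then show ?thesis by simp
qed

lemma L2_bounded: assumes "f \<in> borel_measurable M" "\<And>x. \<bar>f x\<bar> \<le> B" shows "in_L2 M f"
  unfolding in_L2_def
proof
  show "f \<in> borel_measurable M" by fact
  show "integrable M (\<lambda>x. (f x)^2)"
  proof (rule integrable_const_bound[where B="B^2"])
    have "\<forall>x. norm ((f x)^2) \<le> B^2"
    proof
      fix x
      have "\<bar>f x\<bar>^2 \<le> B^2" by (rule power_mono[OF assms(2) abs_ge_zero])
      then show "norm ((f x)^2) \<le> B^2" by simp
    qed
    then show "AE x in M. norm ((f x)^2) \<le> B^2" by simp
    show "(\<lambda>x. (f x)^2) \<in> borel_measurable M" using assms(1) by simp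
  qed
qed

lemma L2_zero: "in_L2 M (\<lambda>x. 0)" by (rule L2_bounded[where B=0]) simp_all

end

sublocale rk \<subseteq> P: prob_space mu by (rule mu_prob)

context rk
begin

lemma ev_L2: "in_L2 mu (evH v)"
  by (rule P.L2_bounded[OF ev_meas ev_bound])

lemma k_is_ev: "(\<lambda>y. k x y) = evH (kv x)" by (simp add: ev_kv fun_eq_iff k_sym)

lemma k_L2: "in_L2 mu (\<lambda>y. k x y)"
proof -
  have "in_L2 mu (evH (kv x))" by (rule ev_L2)
  then show ?thesis using k_is_ev[of x] by simp
qed

lemma T_int: "in_L2 mu f \<Longrightarrow> integrable mu (\<lambda>y. k x y * f y)"
  by (rule P.L2_mult[OF k_L2])

lemma T_lin:
  assumes a: "in_L2 mu a" and b: "in_L2 mu b"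
  shows "T_op mu k (\<lambda>y. a y + c * b y) x = T_op mu k a x + c * T_op mu k b x"
proof -
  have "(\<lambda>y. k x y * (a y + c * b y)) = (\<lambda>y. k x y * a y + c * (k x y * b y))"
    by (simp add: fun_eq_iff algebra_simps)
  then show ?thesis unfolding T_op_def using T_int[OF a] T_int[OF b] by simp
qed

lemma T_cong:
  assumes "a \<in> borel_measurable mu" "b \<in> borel_measurable mu" "AE y in mu. a y = b y"
  shows "T_op mu k a x = T_op mu k b x"
  unfolding T_op_def
proof (rule integral_cong_AE)
  have km: "(\<lambda>y. k x y) \<in> borel_measurable mu" using k_L2 P.L2_meas by blast
  show "(\<lambda>y. k x y * a y) \<in> borel_measurable mu" using km assms(1) by simp
  show "(\<lambda>y. k x y * b y) \<in> borel_measurable mu" using km assms(2) by simp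
  show "AE y in mu. k x y * a y = k x y * b y" using assms(3) by eventually_elim simp
qed

lemma int_ev_bound:
  assumes g: "in_L2 mu g"
  shows "\<bar>\<integral>y. g y * evH v y \<partial>mu\<bar> \<le> (sqrt K * (\<integral>y. \<bar>g y\<bar> \<partial>mu)) * norm v"
proof -
  have gi: "integrable mu g" using P.L2_integrable[OF g] .
  have "\<bar>\<integral>y. g y * evH v y \<partial>mu\<bar> \<le> (\<integral>y. \<bar>g y * evH v y\<bar> \<partial>mu)" by (rule integral_abs_bound)
  also have "\<dots> \<le> (\<integral>y. \<bar>g y\<bar> * (norm v * sqrt K) \<partial>mu)"
  proof (rule integral_mono)
    show "integrable mu (\<lambda>y. \<bar>g y * evH v y\<bar>)" using P.L2_mult[OF g ev_L2] by simp
    show "integrable mu (\<lambda>y. \<bar>g y\<bar> * (norm v * sqrt K))" using gi by simp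
    fix y
    show "\<bar>g y * evH v y\<bar> \<le> \<bar>g y\<bar> * (norm v * sqrt K)"
      unfolding abs_mult by (rule mult_left_mono[OF ev_bound abs_ge_zero])
  qed
  also have "\<dots> = (\<integral>y. \<bar>g y\<bar> \<partial>mu) * (norm v * sqrt K)" using gi by simp
  also have "\<dots> = (sqrt K * (\<integral>y. \<bar>g y\<bar> \<partial>mu)) * norm v" by (simp add: algebra_simps)
  finally show ?thesis .
qed

lemma norm_sq_plus: "(norm (w + t *\<^sub>R v))^2 = (norm w)^2 + 2*t*(w \<bullet> v) + t^2 * (norm v)^2"
proof -
  have "w + t *\<^sub>R v = w - (-t) *\<^sub>R v" by simp
  then have "(norm (w + t *\<^sub>R v))^2 = (norm w)^2 - 2*(-t)*(w \<bullet> v) + (-t)^2 * (norm v)^2"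
    by (simp only: norm_sq_expand)
  then show ?thesis by simp
qed

lemma riesz:
  assumes d: "in_L2 mu d"
  shows "\<exists>w. evH w = T_op mu k d \<and> w \<bullet> w = (\<integral>y. d y * evH w y \<partial>mu)"
proof -
  define A0 where "A0 = sqrt K * (\<integral>y. \<bar>d y\<bar> \<partial>mu)"
  have A0: "A0 \<ge> 0" unfolding A0_def using K_nonneg by simp
  have bnd: "\<bar>\<integral>y. d y * evH v y \<partial>mu\<bar> \<le> A0 * norm v" for v
    unfolding A0_def by (rule int_ev_bound[OF d])
  have dint: "integrable mu (\<lambda>y. d y * evH v y)" for v by (rule P.L2_mult[OF d ev_L2])
  define JR where "JR = (\<lambda>w. (norm w)^2 - 2 * (\<integral>y. d y * evH w y \<partial>mu))"
  define LR where "LR = (\<lambda>w v. w \<bullet> v - (\<integral>y. d y * evH v y \<partial>mu))"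
  define QR where "QR = (\<lambda>v::'h. (norm v)^2)"
  interpret R: quad_fun JR UNIV LR QR 1 1 "- (A0^2)"
  proof
    show "closed (UNIV :: 'h set)" by simp
    show "subspace (UNIV :: 'h set)" by (rule subspace_UNIV)
  next
    fix w v :: 'h and t :: real
    have "(\<lambda>y. d y * evH (w + t *\<^sub>R v) y) = (\<lambda>y. d y * evH w y + t * (d y * evH v y))"
      by (simp add: fun_eq_iff ev_add ev_scale algebra_simps)
    then have i: "(\<integral>y. d y * evH (w + t *\<^sub>R v) y \<partial>mu) = (\<integral>y. d y * evH w y \<partial>mu) + t * (\<integral>y. d y * evH v y \<partial>mu)"
      using dint[of w] dint[of v] by simp
    show "JR (w + t *\<^sub>R v) = JR w + 2 * t * LR w v + t^2 * QR v"
      unfolding JR_def LR_def QR_def i norm_sq_plus by (simp add: algebra_simps)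
  next
    fix w :: 'h
    show "\<exists>A. \<forall>v\<in>UNIV. \<bar>LR w v\<bar> \<le> A * norm v"
    proof (intro exI ballI)
      fix v :: 'h
      have "\<bar>w \<bullet> v\<bar> \<le> norm w * norm v" by (rule Cauchy_Schwarz_ineq2)
      then show "\<bar>LR w v\<bar> \<le> (norm w + A0) * norm v"
        unfolding LR_def using bnd[of v] by (simp add: algebra_simps)
    qed
  next
    fix w :: 'h
    have "(\<integral>y. d y * evH w y \<partial>mu) \<le> A0 * norm w" using bnd[of w] by simp
    moreover have "0 \<le> (norm w - A0)^2" by simp
    ultimately show "- (A0^2) \<le> JR w"
      unfolding JR_def by (simp add: power2_eq_square algebra_simps)
  qed (simp_all add: QR_def)
  obtain u where u: "u \<in> UNIV" "\<forall>v\<in>UNIV. JR u \<le> JR v"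
    using R.exists_min by blast
  have foc: "u \<bullet> v = (\<integral>y. d y * evH v y \<partial>mu)" for v using R.foc[OF u, of v] by (simp add: LR_def)
  have "evH u x = T_op mu k d x" for x
  proof -
    have "evH u x = u \<bullet> kv x" by (rule ev_inner)
    also have "\<dots> = (\<integral>y. d y * evH (kv x) y \<partial>mu)" by (rule foc)
    also have "\<dots> = T_op mu k d x" unfolding T_op_def ev_kv by (simp add: k_sym mult.commute)
    finally show ?thesis .
  qed
  then show ?thesis using foc[of u] by (intro exI[of _ u]) (simp add: fun_eq_iff)
qed

lemma T_ev: "in_L2 mu d \<Longrightarrow> \<exists>w. evH w = T_op mu k d" using riesz by blast

lemma T_L2: assumes "in_L2 mu d" shows "in_L2 mu (T_op mu k d)"
proof -
  obtain w where "evH w = T_op mu k d" using T_ev[OF assms] by blast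
  then show ?thesis using ev_L2[of w] by simp
qed

lemma T_pos: assumes "in_L2 mu d" shows "0 \<le> (\<integral>y. d y * T_op mu k d y \<partial>mu)"
proof -
  obtain w where w: "evH w = T_op mu k d" "w \<bullet> w = (\<integral>y. d y * evH w y \<partial>mu)"
    using riesz[OF assms] by blast
  have "0 \<le> w \<bullet> w" by simp
  then show ?thesis using w by simp
qed

lemma T_unique:
  assumes d: "in_L2 mu d" and rho: "rho > 0" and ae: "AE y in mu. T_op mu k d y + rho * d y = 0"
  shows "AE y in mu. d y = 0"
proof -
  have Td: "in_L2 mu (T_op mu k d)" by (rule T_L2[OF d])
  have i1: "integrable mu (\<lambda>y. d y * T_op mu k d y)" by (rule P.L2_mult[OF d Td])
  have i2: "integrable mu (\<lambda>y. (d y)^2)" by (rule P.L2_sq[OF d])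
  have "(\<integral>y. d y * (T_op mu k d y + rho * d y) \<partial>mu) = (\<integral>y. 0 \<partial>mu)"
  proof (rule integral_cong_AE)
    show "(\<lambda>y. d y * (T_op mu k d y + rho * d y)) \<in> borel_measurable mu"
      using P.L2_meas[OF d] P.L2_meas[OF Td] by simp
    show "(\<lambda>y. 0::real) \<in> borel_measurable mu" by simp
    show "AE y in mu. d y * (T_op mu k d y + rho * d y) = 0" using ae by eventually_elim simp
  qed
  moreover have "(\<lambda>y. d y * (T_op mu k d y + rho * d y)) = (\<lambda>y. d y * T_op mu k d y + rho * (d y)^2)"
    by (simp add: fun_eq_iff algebra_simps power2_eq_square)
  ultimately have "(\<integral>y. d y * T_op mu k d y \<partial>mu) + rho * (\<integral>y. (d y)^2 \<partial>mu) = 0"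
    using i1 i2 by simp
  moreover have "0 \<le> (\<integral>y. d y * T_op mu k d y \<partial>mu)" by (rule T_pos[OF d])
  moreover have "0 \<le> (\<integral>y. (d y)^2 \<partial>mu)" by simp
  moreover have "0 \<le> rho * (\<integral>y. (d y)^2 \<partial>mu)" using rho by simp
  ultimately have "rho * (\<integral>y. (d y)^2 \<partial>mu) = 0" by linarith
  then have "(\<integral>y. (d y)^2 \<partial>mu) = 0" using rho by simp
  then have "AE y in mu. (d y)^2 = 0" using integral_nonneg_eq_0_iff_AE[OF i2] by simp
  then show ?thesis by eventually_elim simp
qed

end

context rk
begin

definition JL where "JL rho h v = (\<integral>x. (evH v x - h x)^2 \<partial>mu) + rho * (norm v)^2"
definition LL where "LL rho h w d = (\<integral>x. (evH w x - h x) * evH d x \<partial>mu) + rho * (w \<bullet> d)"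
definition QQ where "QQ rho d = (\<integral>x. (evH d x)^2 \<partial>mu) + rho * (norm d)^2"

lemma ev_sq_int_bound: "(\<integral>x. (evH d x)^2 \<partial>mu) \<le> K * (norm d)^2"
proof -
  have "(\<integral>x. (evH d x)^2 \<partial>mu) \<le> (\<integral>x. (norm d * sqrt K)^2 \<partial>mu)"
  proof (rule integral_mono)
    show "integrable mu (\<lambda>x. (evH d x)^2)" by (rule P.L2_sq[OF ev_L2])
    show "integrable mu (\<lambda>x. (norm d * sqrt K)^2)" by simp
    fix x
    have "\<bar>evH d x\<bar>^2 \<le> (norm d * sqrt K)^2" by (rule power_mono[OF ev_bound abs_ge_zero])
    then show "(evH d x)^2 \<le> (norm d * sqrt K)^2" by simp
  qed
  also have "\<dots> = (norm d * sqrt K)^2" by (simp add: P.prob_space)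
  also have "\<dots> = K * (norm d)^2" using K_nonneg by (simp add: power_mult_distrib)
  finally show ?thesis .
qed

lemma Lam_quad:
  assumes rho: "rho > 0" and h: "in_L2 mu h"
  shows "quad_fun (JL rho h) UNIV (LL rho h) (QQ rho) rho (K + rho) 0"
proof
  show "closed (UNIV :: 'h set)" by simp
  show "subspace (UNIV :: 'h set)" by (rule subspace_UNIV)
  show "rho > 0" by fact
next
  fix w d :: 'h and t :: real
  have i1: "integrable mu (\<lambda>x. (evH w x - h x)^2)" by (rule P.L2_sq[OF P.L2_diff[OF ev_L2 h]])
  have i2: "integrable mu (\<lambda>x. (evH w x - h x) * evH d x)" by (rule P.L2_mult[OF P.L2_diff[OF ev_L2 h] ev_L2])
  have i3: "integrable mu (\<lambda>x. (evH d x)^2)" by (rule P.L2_sq[OF ev_L2])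
  have "(\<lambda>x. (evH (w + t *\<^sub>R d) x - h x)^2) =
        (\<lambda>x. (evH w x - h x)^2 + (2 * t * ((evH w x - h x) * evH d x) + t^2 * (evH d x)^2))"
    by (simp add: fun_eq_iff ev_add ev_scale power2_eq_square algebra_simps)
  then have e: "(\<integral>x. (evH (w + t *\<^sub>R d) x - h x)^2 \<partial>mu) =
     (\<integral>x. (evH w x - h x)^2 \<partial>mu) + 2 * t * (\<integral>x. (evH w x - h x) * evH d x \<partial>mu) + t^2 * (\<integral>x. (evH d x)^2 \<partial>mu)"
    using i1 i2 i3 by simp
  show "JL rho h (w + t *\<^sub>R d) = JL rho h w + 2 * t * LL rho h w d + t^2 * QQ rho d"
    unfolding JL_def LL_def QQ_def e norm_sq_plus by (simp add: algebra_simps)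
next
  fix d :: 'h
  have "0 \<le> (\<integral>x. (evH d x)^2 \<partial>mu)" by simp
  then show "rho * (norm d)^2 \<le> QQ rho d" unfolding QQ_def by simp
  show "QQ rho d \<le> (K + rho) * (norm d)^2"
    unfolding QQ_def using ev_sq_int_bound[of d] by (simp add: algebra_simps)
next
  fix w :: 'h
  have g: "in_L2 mu (\<lambda>x. evH w x - h x)" by (rule P.L2_diff[OF ev_L2 h])
  show "\<exists>A. \<forall>d\<in>UNIV. \<bar>LL rho h w d\<bar> \<le> A * norm d"
  proof (intro exI ballI)
    fix d :: 'h
    have a: "\<bar>\<integral>x. (evH w x - h x) * evH d x \<partial>mu\<bar> \<le> (sqrt K * (\<integral>x. \<bar>evH w x - h x\<bar> \<partial>mu)) * norm d"
      by (rule int_ev_bound[OF g])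
    have b: "\<bar>rho * (w \<bullet> d)\<bar> \<le> rho * norm w * norm d"
      using Cauchy_Schwarz_ineq2[of w d] rho by (simp add: abs_mult mult.assoc)
    show "\<bar>LL rho h w d\<bar> \<le> (sqrt K * (\<integral>x. \<bar>evH w x - h x\<bar> \<partial>mu) + rho * norm w) * norm d"
      unfolding LL_def using a b by (simp add: algebra_simps)
  qed
next
  fix w :: 'h
  have "0 \<le> (\<integral>x. (evH w x - h x)^2 \<partial>mu)" by simp
  moreover have "0 \<le> rho * (norm w)^2" using rho by simp
  ultimately show "0 \<le> JL rho h w" unfolding JL_def by simp
qed

lemma Lam_min:
  assumes rho: "rho > 0" and h: "in_L2 mu h"
  shows "\<forall>v. JL rho h (Lambda_op mu evH rho h) \<le> JL rho h v"
proof -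
  interpret Q: quad_fun "JL rho h" UNIV "LL rho h" "QQ rho" rho "K + rho" 0 by (rule Lam_quad[OF rho h])
  obtain u where u: "u \<in> UNIV" "\<forall>v\<in>UNIV. JL rho h u \<le> JL rho h v" using Q.exists_min by blast
  have eq: "Lambda_op mu evH rho h = (THE f. \<forall>f'. JL rho h f \<le> JL rho h f')"
    unfolding Lambda_op_def JL_def by simp
  have "(THE f. \<forall>f'. JL rho h f \<le> JL rho h f') = u"
  proof (rule the_equality)
    show "\<forall>f'. JL rho h u \<le> JL rho h f'" using u by simp
    fix f assume "\<forall>f'. JL rho h f \<le> JL rho h f'"
    then show "f = u" using Q.unique[of f u] u by simp
  qed
  then show ?thesis using eq u by simp
qed

lemma T_scale: "T_op mu k (\<lambda>y. c * b y) x = c * T_op mu k b x"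
proof -
  have "(\<lambda>y. k x y * (c * b y)) = (\<lambda>y. c * (k x y * b y))" by (simp add: fun_eq_iff algebra_simps)
  then show ?thesis unfolding T_op_def by simp
qed

lemma Lam_foc:
  assumes rho: "rho > 0" and h: "in_L2 mu h"
  shows "rho * evH (Lambda_op mu evH rho h) x = T_op mu k (\<lambda>y. h y - evH (Lambda_op mu evH rho h) y) x"
proof -
  interpret Q: quad_fun "JL rho h" UNIV "LL rho h" "QQ rho" rho "K + rho" 0 by (rule Lam_quad[OF rho h])
  define u where "u = Lambda_op mu evH rho h"
  have "LL rho h u (kv x) = 0" using Q.foc[of u "kv x"] Lam_min[OF rho h] unfolding u_def by simp
  then have z: "(\<integral>y. (evH u y - h y) * k y x \<partial>mu) + rho * evH u x = 0"
    unfolding LL_def ev_kv by (simp add: ev_inner)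
  have "(\<lambda>y. k x y * (h y - evH u y)) = (\<lambda>y. - ((evH u y - h y) * k y x))"
    by (simp add: fun_eq_iff k_sym algebra_simps)
  then have "T_op mu k (\<lambda>y. h y - evH u y) x = - (\<integral>y. (evH u y - h y) * k y x \<partial>mu)"
    unfolding T_op_def by simp
  then show ?thesis using z unfolding u_def[symmetric] by simp
qed

lemma L2_Lam: "in_L2 mu (evH (Lambda_op mu evH rho h))" by (rule ev_L2)

lemma res_uniq:
  assumes rho: "rho > 0" and g: "in_L2 mu g" and g2: "in_L2 mu g2"
    and e1: "AE y in mu. T_op mu k g y + rho * g y = f y"
    and e2: "AE y in mu. T_op mu k g2 y + rho * g2 y = f y"
  shows "AE y in mu. g y = g2 y"
proof -
  define d where "d = (\<lambda>y. g y + (-1) * g2 y)"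
  have d: "in_L2 mu d" unfolding d_def by (rule P.L2_add[OF g P.L2_scale[OF g2]])
  have Td: "T_op mu k d y = T_op mu k g y + (-1) * T_op mu k g2 y" for y
    unfolding d_def by (rule T_lin[OF g g2])
  have dy: "d y = g y - g2 y" for y by (simp add: d_def)
  have "AE y in mu. T_op mu k d y + rho * d y = 0"
    using e1 e2
  proof eventually_elim
    case (elim y)
    have "rho * d y = rho * g y - rho * g2 y" by (simp add: dy right_diff_distrib)
    then show ?case using Td[of y] elim by linarith
  qed
  then have "AE y in mu. d y = 0" by (rule T_unique[OF d rho])
  then show ?thesis by eventually_elim (simp add: d_def)
qed

lemma res_exists:
  assumes rho: "rho > 0" and f: "in_L2 mu f"
  shows "in_L2 mu (\<lambda>y. (1/rho) * (f y - evH (Lambda_op mu evH rho f) y))"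
    and "\<And>y. T_op mu k (\<lambda>y. (1/rho) * (f y - evH (Lambda_op mu evH rho f) y)) y = evH (Lambda_op mu evH rho f) y"
    and "\<And>y. T_op mu k (\<lambda>y. (1/rho) * (f y - evH (Lambda_op mu evH rho f) y)) y
             + rho * ((1/rho) * (f y - evH (Lambda_op mu evH rho f) y)) = f y"
proof -
  define E where "E = evH (Lambda_op mu evH rho f)"
  show "in_L2 mu (\<lambda>y. (1/rho) * (f y - evH (Lambda_op mu evH rho f) y))"
    by (rule P.L2_scale[OF P.L2_diff[OF f ev_L2]])
  have T: "T_op mu k (\<lambda>y. (1/rho) * (f y - E y)) y = E y" for y
  proof -
    have "T_op mu k (\<lambda>y. (1/rho) * (f y - E y)) y = (1/rho) * T_op mu k (\<lambda>y. f y - E y) y"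
      by (rule T_scale)
    also have "T_op mu k (\<lambda>y. f y - E y) y = rho * E y" unfolding E_def using Lam_foc[OF rho f] by simp
    finally show ?thesis using rho by simp
  qed
  then show "\<And>y. T_op mu k (\<lambda>y. (1/rho) * (f y - evH (Lambda_op mu evH rho f) y)) y = evH (Lambda_op mu evH rho f) y"
    unfolding E_def .
  fix y
  show "T_op mu k (\<lambda>y. (1/rho) * (f y - evH (Lambda_op mu evH rho f) y)) y
             + rho * ((1/rho) * (f y - evH (Lambda_op mu evH rho f) y)) = f y"
    using T[of y] rho unfolding E_def by simp
qed

lemma res_prop:
  assumes rho: "rho > 0" and f: "in_L2 mu f"
  shows "in_L2 mu (resolvent mu k rho f) \<and> (AE x in mu. T_op mu k (resolvent mu k rho f) x + rho * resolvent mu k rho f x = f x)"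
proof -
  have "\<exists>g. in_L2 mu g \<and> (AE x in mu. T_op mu k g x + rho * g x = f x)"
    using res_exists[OF rho f] by (intro exI[of _ "\<lambda>y. (1/rho) * (f y - evH (Lambda_op mu evH rho f) y)"]) simp
  then show ?thesis unfolding resolvent_def by (rule someI_ex)
qed

lemma res_T:
  assumes rho: "rho > 0" and f: "in_L2 mu f"
  shows "T_op mu k (resolvent mu k rho f) x = evH (Lambda_op mu evH rho f) x"
proof -
  define g0 where "g0 = (\<lambda>y. (1/rho) * (f y - evH (Lambda_op mu evH rho f) y))"
  have g0: "in_L2 mu g0" unfolding g0_def by (rule res_exists(1)[OF rho f])
  have R: "in_L2 mu (resolvent mu k rho f)" using res_prop[OF rho f] by blast
  have "AE y in mu. resolvent mu k rho f y = g0 y"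
  proof (rule res_uniq[OF rho R g0])
    show "AE y in mu. T_op mu k (resolvent mu k rho f) y + rho * resolvent mu k rho f y = f y"
      using res_prop[OF rho f] by blast
    show "AE y in mu. T_op mu k g0 y + rho * g0 y = f y"
      unfolding g0_def using res_exists(3)[OF rho f] by simp
  qed
  then have "T_op mu k (resolvent mu k rho f) x = T_op mu k g0 x"
    by (rule T_cong[OF P.L2_meas[OF R] P.L2_meas[OF g0]])
  also have "\<dots> = evH (Lambda_op mu evH rho f) x" unfolding g0_def by (rule res_exists(2)[OF rho f])
  finally show ?thesis .
qed

end

lemma (in prob_space) sq_int_le:
  fixes f :: "'a \<Rightarrow> real"
  assumes f: "integrable M f" and f2: "integrable M (\<lambda>x. (f x)^2)"
  shows "(\<integral>x. f x \<partial>M)^2 \<le> (\<integral>x. (f x)^2 \<partial>M)"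
proof -
  define m where "m = (\<integral>x. f x \<partial>M)"
  have "(\<lambda>x. (f x - m)^2) = (\<lambda>x. (f x)^2 + ((-2*m) * f x + m^2))"
    by (simp add: fun_eq_iff power2_eq_square algebra_simps)
  then have "(\<integral>x. (f x - m)^2 \<partial>M) = (\<integral>x. (f x)^2 \<partial>M) + ((-2*m) * m + m^2)"
    using f f2 by (simp add: m_def prob_space)
  moreover have "0 \<le> (\<integral>x. (f x - m)^2 \<partial>M)" by simp
  ultimately show ?thesis unfolding m_def[symmetric] by (simp add: power2_eq_square)
qed

locale orb = rk mu k evH for mu :: "'x::topological_space measure" and k and evH :: "'h::{real_inner,complete_space} \<Rightarrow> 'x \<Rightarrow> real" +
  fixes lam :: "'g::topological_space measure" and act :: "'g \<Rightarrow> 'x \<Rightarrow> 'x"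
  assumes lam_sets: "sets lam = sets borel" and lam_prob: "prob_space lam"
    and act_meas: "(\<lambda>p. act (fst p) (snd p)) \<in> borel_measurable (borel \<Otimes>\<^sub>M borel)"
    and mu_inv: "invariant_measure act mu"
begin

sublocale L: prob_space lam by (rule lam_prob)
sublocale PP: pair_prob_space mu lam
  by (simp add: pair_prob_space_def pair_sigma_finite_def mu_prob lam_prob prob_space_imp_sigma_finite)

lemma space_mu: "space mu = UNIV" using sets_eq_imp_space_eq[OF mu_sets] by simp
lemma space_lam: "space lam = UNIV" using sets_eq_imp_space_eq[OF lam_sets] by simp

lemma to_borel: "f \<in> measurable mu N \<Longrightarrow> f \<in> measurable borel N"
  using measurable_cong_sets[OF mu_sets refl, of N] by simp

lemma act_swap: "(\<lambda>p. act (snd p) (fst p)) \<in> measurable (mu \<Otimes>\<^sub>M lam) borel"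
proof -
  have "(\<lambda>(x,y). (\<lambda>p. act (fst p) (snd p)) (y,x)) \<in> measurable (borel \<Otimes>\<^sub>M borel) borel"
    by (rule measurable_pair_swap_iff[THEN iffD1, OF act_meas])
  then have "(\<lambda>p. act (snd p) (fst p)) \<in> measurable ((borel :: 'x measure) \<Otimes>\<^sub>M (borel :: 'g measure)) borel"
    by (simp add: case_prod_beta')
  moreover have "sets (mu \<Otimes>\<^sub>M lam) = sets ((borel :: 'x measure) \<Otimes>\<^sub>M (borel :: 'g measure))"
    by (rule sets_pair_measure_cong[OF mu_sets lam_sets])
  then have "(measurable (mu \<Otimes>\<^sub>M lam) borel :: ('x \<times> 'g \<Rightarrow> 'x) set) = measurable ((borel :: 'x measure) \<Otimes>\<^sub>M (borel :: 'g measure)) borel"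
    by (rule measurable_cong_sets[OF _ refl])
  ultimately show ?thesis by simp
qed

lemma F_meas:
  fixes f :: "'x \<Rightarrow> 'b::topological_space"
  assumes f: "f \<in> borel_measurable borel"
  shows "(\<lambda>p. f (act (snd p) (fst p))) \<in> borel_measurable (mu \<Otimes>\<^sub>M lam)"
  using measurable_comp[OF act_swap f] by (simp add: comp_def)

lemma act_g_meas: "act g \<in> measurable mu borel"
proof -
  have "(\<lambda>x. (fst (x, g), snd (x,g))) \<in> measurable mu (mu \<Otimes>\<^sub>M lam)"
    using measurable_Pair2'[of g lam mu] space_lam by simp
  from measurable_comp[OF this act_swap] show ?thesis by (simp add: comp_def)
qed

lemma act_x_meas: "(\<lambda>g. act g x) \<in> measurable lam borel"
proof -
  have "(\<lambda>g. (x, g)) \<in> measurable lam (mu \<Otimes>\<^sub>M lam)"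
    using measurable_Pair1'[of x mu lam] space_mu by simp
  from measurable_comp[OF this act_swap] show ?thesis by (simp add: comp_def)
qed

lemma distr_act: "distr mu borel (act g) = mu"
proof (rule measure_eqI)
  show "sets (distr mu borel (act g)) = sets mu" using mu_sets by simp
  fix A assume "A \<in> sets (distr mu borel (act g))"
  then have A: "A \<in> sets borel" by simp
  have "emeasure (distr mu borel (act g)) A = emeasure mu (act g -` A \<inter> space mu)"
    by (rule emeasure_distr[OF act_g_meas A])
  also have "\<dots> = emeasure mu (act g -` A)" using space_mu by simp
  also have "\<dots> = emeasure mu A" using mu_inv A unfolding invariant_measure_def by blast
  finally show "emeasure (distr mu borel (act g)) A = emeasure mu A" .
qed

lemma nn_inv:
  fixes phi :: "'x \<Rightarrow> ennreal"
  assumes phi: "phi \<in> borel_measurable borel"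
  shows "(\<integral>\<^sup>+x. phi (act g x) \<partial>mu) = (\<integral>\<^sup>+x. phi x \<partial>mu)"
proof -
  have "(\<integral>\<^sup>+x. phi x \<partial>(distr mu borel (act g))) = (\<integral>\<^sup>+x. phi (act g x) \<partial>mu)"
    by (rule nn_integral_distr[OF act_g_meas]) (simp add: phi)
  then show ?thesis using distr_act by simp
qed

lemma nn_O:
  fixes phi :: "'x \<Rightarrow> ennreal"
  assumes phi: "phi \<in> borel_measurable borel"
  shows "(\<integral>\<^sup>+x. (\<integral>\<^sup>+g. phi (act g x) \<partial>lam) \<partial>mu) = (\<integral>\<^sup>+x. phi x \<partial>mu)"
proof -
  have m: "(\<lambda>p. phi (act (snd p) (fst p))) \<in> borel_measurable (mu \<Otimes>\<^sub>M lam)" by (rule F_meas[OF phi])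
  have "(\<integral>\<^sup>+x. (\<integral>\<^sup>+g. phi (act g x) \<partial>lam) \<partial>mu) = (\<integral>\<^sup>+g. (\<integral>\<^sup>+x. phi (act g x) \<partial>mu) \<partial>lam)"
    using PP.Fubini[OF m] by simp
  also have "\<dots> = (\<integral>\<^sup>+g. (\<integral>\<^sup>+x. phi x \<partial>mu) \<partial>lam)" using nn_inv[OF phi] by simp
  also have "\<dots> = (\<integral>\<^sup>+x. phi x \<partial>mu)" using L.emeasure_space_1 by simp
  finally show ?thesis .
qed

lemma nn_x_meas:
  fixes phi :: "'x \<Rightarrow> ennreal"
  assumes phi: "phi \<in> borel_measurable borel"
  shows "(\<lambda>x. \<integral>\<^sup>+g. phi (act g x) \<partial>lam) \<in> borel_measurable mu"
  using L.borel_measurable_nn_integral[of "\<lambda>x g. phi (act g x)" mu] F_meas[OF phi] by (simp add: case_prod_beta')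

lemma L2_sq_nn:
  assumes "in_L2 mu f"
  shows "(\<integral>\<^sup>+x. ennreal ((f x)^2) \<partial>mu) < \<infinity>"
proof -
  have "integrable mu (\<lambda>x. (f x)^2)" using assms P.L2_sq by blast
  then have "(\<integral>\<^sup>+x. ennreal (norm ((f x)^2)) \<partial>mu) < \<infinity>"
    by (rule conjunct2[OF integrable_iff_bounded[THEN iffD1]])
  then show ?thesis by simp
qed

lemma O_int_ae:
  assumes a: "in_L2 mu a"
  shows "AE x in mu. integrable lam (\<lambda>g. a (act g x)) \<and> integrable lam (\<lambda>g. (a (act g x))^2)"
proof -
  have am: "a \<in> borel_measurable borel" by (rule to_borel[OF P.L2_meas[OF a]])
  have phim: "(\<lambda>x. ennreal ((a x)^2)) \<in> borel_measurable borel" using am by simp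
  have "(\<integral>\<^sup>+x. (\<integral>\<^sup>+g. ennreal ((a (act g x))^2) \<partial>lam) \<partial>mu) = (\<integral>\<^sup>+x. ennreal ((a x)^2) \<partial>mu)"
    by (rule nn_O[OF phim])
  also have "\<dots> < \<infinity>" by (rule L2_sq_nn[OF a])
  finally have "(\<integral>\<^sup>+x. (\<integral>\<^sup>+g. ennreal ((a (act g x))^2) \<partial>lam) \<partial>mu) \<noteq> \<infinity>" by simp
  then have "AE x in mu. (\<integral>\<^sup>+g. ennreal ((a (act g x))^2) \<partial>lam) \<noteq> \<infinity>"
    by (rule nn_integral_PInf_AE[OF nn_x_meas[OF phim]])
  then show ?thesis
  proof eventually_elim
    case (elim x)
    have gm: "(\<lambda>g. a (act g x)) \<in> borel_measurable lam" using measurable_comp[OF act_x_meas am] by (simp add: comp_def)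
    have "(\<integral>\<^sup>+g. ennreal (norm ((a (act g x))^2)) \<partial>lam) < \<infinity>" using elim by (simp add: top.not_eq_extremum)
    then have i2: "integrable lam (\<lambda>g. (a (act g x))^2)" using gm by (simp add: integrable_iff_bounded)
    have "integrable lam (\<lambda>g. a (act g x))" by (rule L.square_integrable_imp_integrable[OF gm i2])
    then show ?case using i2 by simp
  qed
qed

lemma O_L2:
  assumes f: "in_L2 mu f"
  shows "in_L2 mu (orbit_avg lam act f)"
proof -
  have fm: "f \<in> borel_measurable borel" by (rule to_borel[OF P.L2_meas[OF f]])
  have Om: "orbit_avg lam act f \<in> borel_measurable mu"
    unfolding orbit_avg_def
    using L.borel_measurable_lebesgue_integral[of "\<lambda>x g. f (act g x)" mu] F_meas[OF fm] by (simp add: case_prod_beta')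
  have phim: "(\<lambda>x. ennreal ((f x)^2)) \<in> borel_measurable borel" using fm by simp
  have pw: "ennreal (norm ((orbit_avg lam act f x)^2)) \<le> (\<integral>\<^sup>+g. ennreal ((f (act g x))^2) \<partial>lam)" for x
  proof (cases "integrable lam (\<lambda>g. (f (act g x))^2)")
    case True
    have gm: "(\<lambda>g. f (act g x)) \<in> borel_measurable lam" using measurable_comp[OF act_x_meas fm] by (simp add: comp_def)
    have i1: "integrable lam (\<lambda>g. f (act g x))" by (rule L.square_integrable_imp_integrable[OF gm True])
    have "(orbit_avg lam act f x)^2 \<le> (\<integral>g. (f (act g x))^2 \<partial>lam)"
      unfolding orbit_avg_def by (rule L.sq_int_le[OF i1 True])
    also have "ennreal (\<integral>g. (f (act g x))^2 \<partial>lam) = (\<integral>\<^sup>+g. ennreal ((f (act g x))^2) \<partial>lam)"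
      by (rule nn_integral_eq_integral[symmetric]) (simp_all add: True)
    finally show ?thesis by (simp add: ennreal_leI)
  next
    case False
    have gm: "(\<lambda>g. f (act g x)) \<in> borel_measurable lam" using measurable_comp[OF act_x_meas fm] by (simp add: comp_def)
    have "\<not> (\<integral>\<^sup>+g. ennreal (norm ((f (act g x))^2)) \<partial>lam) < \<infinity>"
      using False gm by (simp add: integrable_iff_bounded)
    then have "\<not> (\<integral>\<^sup>+g. ennreal ((f (act g x))^2) \<partial>lam) < \<infinity>" by simp
    then have "(\<integral>\<^sup>+g. ennreal ((f (act g x))^2) \<partial>lam) = \<infinity>"
      using less_top[of "\<integral>\<^sup>+g. ennreal ((f (act g x))^2) \<partial>lam"] by (simp only: infinity_ennreal_def) blast
    then show ?thesis by simp
  qed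
  have "(\<integral>\<^sup>+x. ennreal (norm ((orbit_avg lam act f x)^2)) \<partial>mu) \<le> (\<integral>\<^sup>+x. (\<integral>\<^sup>+g. ennreal ((f (act g x))^2) \<partial>lam) \<partial>mu)"
    by (rule nn_integral_mono) (rule pw)
  also have "\<dots> = (\<integral>\<^sup>+x. ennreal ((f x)^2) \<partial>mu)" by (rule nn_O[OF phim])
  also have "\<dots> < \<infinity>" by (rule L2_sq_nn[OF f])
  finally have "integrable mu (\<lambda>x. (orbit_avg lam act f x)^2)"
    using Om by (simp add: integrable_iff_bounded)
  then show ?thesis unfolding in_L2_def using Om by simp
qed

lemma O_cong:
  assumes f1: "f1 \<in> borel_measurable mu" and f2: "f2 \<in> borel_measurable mu" and ae: "AE y in mu. f1 y = f2 y"
  shows "AE x in mu. orbit_avg lam act f1 x = orbit_avg lam act f2 x"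
proof -
  define N where "N = {y. f1 y \<noteq> f2 y}"
  have f1b: "f1 \<in> borel_measurable borel" by (rule to_borel[OF f1])
  have f2b: "f2 \<in> borel_measurable borel" by (rule to_borel[OF f2])
  have Nb: "N \<in> sets borel" unfolding N_def using f1b f2b by measurable
  have Nm: "N \<in> sets mu" using Nb mu_sets by simp
  have "emeasure mu N = 0"
    using ae AE_iff_measurable[OF Nm, of "\<lambda>y. f1 y = f2 y"] space_mu unfolding N_def by simp
  have phim: "(\<lambda>y. indicator N y :: ennreal) \<in> borel_measurable borel" using Nb by simp
  have "(\<integral>\<^sup>+x. (\<integral>\<^sup>+g. indicator N (act g x) \<partial>lam) \<partial>mu) = (\<integral>\<^sup>+x. indicator N x \<partial>mu)"
    by (rule nn_O[OF phim])
  also have "\<dots> = emeasure mu N" using Nm by simp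
  also have "\<dots> = 0" by fact
  finally have "AE x in mu. (\<integral>\<^sup>+g. indicator N (act g x) \<partial>lam) = (0::ennreal)"
    using nn_integral_0_iff_AE[OF nn_x_meas[OF phim]] by simp
  then show ?thesis
  proof eventually_elim
    case (elim x)
    have im: "(\<lambda>g. indicator N (act g x) :: ennreal) \<in> borel_measurable lam"
      using measurable_comp[OF act_x_meas phim] by (simp add: comp_def)
    have "AE g in lam. (indicator N (act g x) :: ennreal) = 0"
      using elim nn_integral_0_iff_AE[OF im] by simp
    then have "AE g in lam. f1 (act g x) = f2 (act g x)"
      by eventually_elim (simp add: N_def indicator_def split: if_splits)
    then show ?case unfolding orbit_avg_def
      by (intro integral_cong_AE) (use measurable_comp[OF act_x_meas f1b] measurable_comp[OF act_x_meas f2b] in \<open>simp_all add: comp_def\<close>)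
  qed
qed

lemma O_lin:
  assumes a: "in_L2 mu a" and b: "in_L2 mu b"
  shows "AE x in mu. orbit_avg lam act (\<lambda>y. a y + c * b y) x = orbit_avg lam act a x + c * orbit_avg lam act b x"
  using O_int_ae[OF a] O_int_ae[OF b]
proof eventually_elim
  case (elim x)
  then show ?case unfolding orbit_avg_def by simp
qed

end

context orb
begin

lemma T_zero: "T_op mu k (\<lambda>y. 0) x = 0" unfolding T_op_def by simp

lemma part1:
  assumes rho: "rho > 0" and f: "in_L2 mu f"
  shows "(AE x in mu. comm_O_Lambda lam act mu evH rho f x = 0) \<longleftrightarrow>
         (AE x in mu. comm_O_T lam act mu k (resolvent mu k rho f) x = 0)"
proof -
  define g where "g = resolvent mu k rho f"
  have g: "in_L2 mu g" and e1: "AE y in mu. T_op mu k g y + rho * g y = f y"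
    using res_prop[OF rho f] unfolding g_def by blast+
  have TgE: "T_op mu k g = evH (Lambda_op mu evH rho f)"
    unfolding g_def using res_T[OF rho f] by (simp add: fun_eq_iff)
  define Of where "Of = orbit_avg lam act f"
  have Of: "in_L2 mu Of" unfolding Of_def by (rule O_L2[OF f])
  define g' where "g' = resolvent mu k rho Of"
  have g': "in_L2 mu g'" and e2: "AE y in mu. T_op mu k g' y + rho * g' y = Of y"
    using res_prop[OF rho Of] unfolding g'_def by blast+
  have Tg'E: "T_op mu k g' = evH (Lambda_op mu evH rho Of)"
    unfolding g'_def using res_T[OF rho Of] by (simp add: fun_eq_iff)
  define Og where "Og = orbit_avg lam act g"
  have Og: "in_L2 mu Og" unfolding Og_def by (rule O_L2[OF g])
  define Tg where "Tg = T_op mu k g"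
  have Tg: "in_L2 mu Tg" unfolding Tg_def by (rule T_L2[OF g])
  define OTg where "OTg = orbit_avg lam act Tg"
  have sL2: "in_L2 mu (\<lambda>y. Tg y + rho * g y)" by (rule P.L2_add[OF Tg P.L2_scale[OF g]])
  have a: "AE x in mu. Of x = orbit_avg lam act (\<lambda>y. Tg y + rho * g y) x"
    unfolding Of_def
  proof (rule O_cong[OF P.L2_meas[OF f] P.L2_meas[OF sL2]])
    show "AE y in mu. f y = Tg y + rho * g y" using e1 unfolding Tg_def by eventually_elim simp
  qed
  have b: "AE x in mu. orbit_avg lam act (\<lambda>y. Tg y + rho * g y) x = OTg x + rho * Og x"
    unfolding OTg_def Og_def by (rule O_lin[OF Tg g])
  define d where "d = (\<lambda>y. g' y + (-1) * Og y)"
  have d: "in_L2 mu d" unfolding d_def by (rule P.L2_add[OF g' P.L2_scale[OF Og]])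
  have Td: "T_op mu k d x = T_op mu k g' x + (-1) * T_op mu k Og x" for x
    unfolding d_def by (rule T_lin[OF g' Og])
  have dx: "d x = g' x - Og x" for x by (simp add: d_def)
  have cL: "comm_O_Lambda lam act mu evH rho f x = OTg x - T_op mu k g' x" for x
    unfolding comm_O_Lambda_def OTg_def Tg_def TgE Tg'E Of_def ..
  have cT: "comm_O_T lam act mu k g x = OTg x - T_op mu k Og x" for x
    unfolding comm_O_T_def OTg_def Tg_def Og_def ..
  have AL: "AE x in mu. comm_O_Lambda lam act mu evH rho f x = rho * d x"
    using a b e2
  proof eventually_elim
    case (elim x)
    have "rho * d x = rho * g' x - rho * Og x" by (simp add: dx right_diff_distrib)
    then show ?case using elim cL[of x] by linarith
  qed
  have AT: "AE x in mu. comm_O_T lam act mu k g x = T_op mu k d x + rho * d x"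
    using a b e2
  proof eventually_elim
    case (elim x)
    have "rho * d x = rho * g' x - rho * Og x" by (simp add: dx right_diff_distrib)
    then show ?case using elim cT[of x] Td[of x] by linarith
  qed
  show ?thesis unfolding g_def[symmetric]
  proof
    assume "AE x in mu. comm_O_Lambda lam act mu evH rho f x = 0"
    then have d0: "AE x in mu. d x = 0" using AL
    proof eventually_elim
      case (elim x)
      then show ?case using rho by simp
    qed
    have "T_op mu k d x = T_op mu k (\<lambda>y. 0) x" for x
      by (rule T_cong[OF P.L2_meas[OF d] _ d0]) simp
    then have Td0: "T_op mu k d x = 0" for x using T_zero by simp
    show "AE x in mu. comm_O_T lam act mu k g x = 0" using AT d0 by eventually_elim (simp add: Td0)
  next
    assume "AE x in mu. comm_O_T lam act mu k g x = 0"
    then have "AE x in mu. T_op mu k d x + rho * d x = 0" using AT by eventually_elim simp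
    then have d0: "AE x in mu. d x = 0" by (rule T_unique[OF d rho])
    then show "AE x in mu. comm_O_Lambda lam act mu evH rho f x = 0" using AL by eventually_elim simp
  qed
qed

lemma a_to_c:
  assumes rho: "rho > 0" and A: "\<forall>f. in_L2 mu f \<longrightarrow> (AE x in mu. comm_O_Lambda lam act mu evH rho f x = 0)"
  shows "\<forall>f. in_L2 mu f \<longrightarrow> (AE x in mu. comm_O_T lam act mu k f x = 0)"
proof (intro allI impI)
  fix f' assume f': "in_L2 mu f'"
  define f where "f = (\<lambda>y. T_op mu k f' y + rho * f' y)"
  have f: "in_L2 mu f" unfolding f_def by (rule P.L2_add[OF T_L2[OF f'] P.L2_scale[OF f']])
  define R where "R = resolvent mu k rho f"
  have R: "in_L2 mu R" and eR: "AE y in mu. T_op mu k R y + rho * R y = f y"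
    using res_prop[OF rho f] unfolding R_def by blast+
  have "AE y in mu. R y = f' y"
    by (rule res_uniq[OF rho R f' eR]) (simp add: f_def)
  then have Rf: "AE y in mu. R y = f' y" .
  have TR: "T_op mu k R = T_op mu k f'"
    using T_cong[OF P.L2_meas[OF R] P.L2_meas[OF f'] Rf] by (simp add: fun_eq_iff)
  have ORf: "AE x in mu. orbit_avg lam act R x = orbit_avg lam act f' x"
    by (rule O_cong[OF P.L2_meas[OF R] P.L2_meas[OF f'] Rf])
  have TOR: "T_op mu k (orbit_avg lam act R) x = T_op mu k (orbit_avg lam act f') x" for x
    by (rule T_cong[OF P.L2_meas[OF O_L2[OF R]] P.L2_meas[OF O_L2[OF f']] ORf])
  have eq: "comm_O_T lam act mu k R x = comm_O_T lam act mu k f' x" for x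
    unfolding comm_O_T_def TR TOR ..
  have "AE x in mu. comm_O_T lam act mu k R x = 0"
    using part1[OF rho f] A f unfolding R_def by blast
  then show "AE x in mu. comm_O_T lam act mu k f' x = 0" using eq by simp
qed

lemma c_to_b:
  assumes C: "\<forall>f. in_L2 mu f \<longrightarrow> (AE x in mu. comm_O_T lam act mu k f x = 0)"
  shows "\<forall>rho > 0. \<forall>f. in_L2 mu f \<longrightarrow> (AE x in mu. comm_O_Lambda lam act mu evH rho f x = 0)"
proof (intro allI impI)
  fix rho :: real and f assume rho: "rho > 0" and f: "in_L2 mu f"
  have "in_L2 mu (resolvent mu k rho f)" using res_prop[OF rho f] by blast
  then have "AE x in mu. comm_O_T lam act mu k (resolvent mu k rho f) x = 0" using C by blast
  then show "AE x in mu. comm_O_Lambda lam act mu evH rho f x = 0" using part1[OF rho f] by blast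
qed

end

theorem lemma5p6:
  fixes lam :: "'g::{topological_group_add, second_countable_topology, t2_space} measure"
    and act :: "'g \<Rightarrow> 'x::polish_space \<Rightarrow> 'x"
    and mu :: "'x measure"
    and k :: "'x \<Rightarrow> 'x \<Rightarrow> real"
    and evH :: "'h::{real_inner, complete_space} \<Rightarrow> 'x \<Rightarrow> real"
  assumes G_compact: "compact (UNIV :: 'g set)"
    and haar: "haar_prob lam"
    and action: "group_action act"
    and act_meas: "(\<lambda>p. act (fst p) (snd p)) \<in> borel_measurable (borel \<Otimes>\<^sub>M borel)"
    and mu_sets: "sets mu = sets borel"
    and mu_prob: "prob_space mu"
    and mu_inv: "invariant_measure act mu"
    and mu_supp: "full_support mu"
    and k_meas: "(\<lambda>p. k (fst p) (snd p)) \<in> borel_measurable (borel \<Otimes>\<^sub>M borel)"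
    and k_sym: "\<And>x y. k x y = k y x"
    and k_pd: "pos_def_kernel k"
    and k_cont: "\<And>x. continuous_on UNIV (\<lambda>y. k y x)"
    and k_bdd: "bdd_above (range (\<lambda>x. k x x))"
    and H: "is_rkhs k evH"
  shows "(\<forall>rho > 0. \<forall>f. in_L2 mu f \<longrightarrow>
            ((AE x in mu. comm_O_Lambda lam act mu evH rho f x = 0) \<longleftrightarrow>
             (AE x in mu. comm_O_T lam act mu k (resolvent mu k rho f) x = 0)))
       \<and> ((\<exists>rho > 0. \<forall>f. in_L2 mu f \<longrightarrow> (AE x in mu. comm_O_Lambda lam act mu evH rho f x = 0)) \<longleftrightarrow>
          (\<forall>rho > 0. \<forall>f. in_L2 mu f \<longrightarrow> (AE x in mu. comm_O_Lambda lam act mu evH rho f x = 0)))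
       \<and> ((\<forall>rho > 0. \<forall>f. in_L2 mu f \<longrightarrow> (AE x in mu. comm_O_Lambda lam act mu evH rho f x = 0)) \<longleftrightarrow>
          (\<forall>f. in_L2 mu f \<longrightarrow> (AE x in mu. comm_O_T lam act mu k f x = 0)))"
proof -
  have lam_sets: "sets lam = sets borel" and lam_prob: "prob_space lam"
    using haar unfolding haar_prob_def by blast+
  have rkI: "rk mu k evH" by (rule rk.intro[OF mu_sets mu_prob k_sym k_cont k_bdd H])
  interpret O: orb mu k evH lam act
    by (rule orb.intro[OF rkI orb_axioms.intro[OF lam_sets lam_prob act_meas mu_inv]])
  show ?thesis
  proof (intro conjI)
    show "\<forall>rho > 0. \<forall>f. in_L2 mu f \<longrightarrow>
            ((AE x in mu. comm_O_Lambda lam act mu evH rho f x = 0) \<longleftrightarrow>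
             (AE x in mu. comm_O_T lam act mu k (resolvent mu k rho f) x = 0))"
      using O.part1 by blast
    show "(\<exists>rho > 0. \<forall>f. in_L2 mu f \<longrightarrow> (AE x in mu. comm_O_Lambda lam act mu evH rho f x = 0)) \<longleftrightarrow>
          (\<forall>rho > 0. \<forall>f. in_L2 mu f \<longrightarrow> (AE x in mu. comm_O_Lambda lam act mu evH rho f x = 0))"
    proof
      assume "\<exists>rho > 0. \<forall>f. in_L2 mu f \<longrightarrow> (AE x in mu. comm_O_Lambda lam act mu evH rho f x = 0)"
      then obtain rho where rho: "rho > 0" and A: "\<forall>f. in_L2 mu f \<longrightarrow> (AE x in mu. comm_O_Lambda lam act mu evH rho f x = 0)"
        by blast
      show "\<forall>rho > 0. \<forall>f. in_L2 mu f \<longrightarrow> (AE x in mu. comm_O_Lambda lam act mu evH rho f x = 0)"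
        by (rule O.c_to_b[OF O.a_to_c[OF rho A]])
    next
      assume B: "\<forall>rho > 0. \<forall>f. in_L2 mu f \<longrightarrow> (AE x in mu. comm_O_Lambda lam act mu evH rho f x = 0)"
      show "\<exists>rho > 0. \<forall>f. in_L2 mu f \<longrightarrow> (AE x in mu. comm_O_Lambda lam act mu evH rho f x = 0)"
        using B[rule_format, of 1] by (intro exI[of _ 1]) simp
    qed
    show "(\<forall>rho > 0. \<forall>f. in_L2 mu f \<longrightarrow> (AE x in mu. comm_O_Lambda lam act mu evH rho f x = 0)) \<longleftrightarrow>
          (\<forall>f. in_L2 mu f \<longrightarrow> (AE x in mu. comm_O_T lam act mu k f x = 0))"
    proof
      assume B: "\<forall>rho > 0. \<forall>f. in_L2 mu f \<longrightarrow> (AE x in mu. comm_O_Lambda lam act mu evH rho f x = 0)"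
      have "(1::real) > 0" by simp
      moreover have "\<forall>f. in_L2 mu f \<longrightarrow> (AE x in mu. comm_O_Lambda lam act mu evH 1 f x = 0)"
        using B by simp
      ultimately show "\<forall>f. in_L2 mu f \<longrightarrow> (AE x in mu. comm_O_T lam act mu k f x = 0)"
        by (rule O.a_to_c)
    next
      assume "\<forall>f. in_L2 mu f \<longrightarrow> (AE x in mu. comm_O_T lam act mu k f x = 0)"
      then show "\<forall>rho > 0. \<forall>f. in_L2 mu f \<longrightarrow> (AE x in mu. comm_O_Lambda lam act mu evH rho f x = 0)"
        by (rule O.c_to_b)
    qed
  qed
qed

end
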